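(* Let $T$ be a complete theory with monster model $\mathcal{U}$, $A\subseteq\mathcal{U}$ small, $\mu\in\mathfrak{M}_x(\mathcal{U})$, $\nu\in\mathfrak{M}_y(\mathcal{U})$, and suppose $\lambda\in\mathfrak{M}_{xy}(A)$ witnesses $\mu\geq_{\mathbb{E},A}\nu$. Then for every $\psi(y)\in\mathcal{L}_y(\mathcal{U})$ and $\epsilon>0$ there exist $\chi^-_\epsilon(x,y),\chi^+_\epsilon(x,y)\in\mathbb{B}_{xy}(A)$ such that (1) $\chi^-_\epsilon(x,y)\subseteq(\psi(y)\wedge x=x)\subseteq\chi^+_\epsilon(x,y)$; (2) for every $\omega\in\operatorname{E}(\lambda,\mu)$, $\omega(\chi^+_\epsilon(x,y))-\omega(\chi^-_\epsilon(x,y))<\epsilon$; (3) for every $\omega\in\operatorname{E}(\lambda,\mu)$, $|\omega(\chi^{\dagger}_\epsilon(x,y))-\nu(\psi(y))|<\epsilon$ for $\dagger\in\{+,-\}$.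
   Context: For $B\subseteq\mathcal{U}$, $\mathcal{L}_x(B)$ is the Boolean algebra of formulas in $x$ with parameters from $B$ modulo $T$, identified with $B$-definable sets, and embedded in $\mathcal{L}_{xy}(B)$ via $\varphi(x)\mapsto\varphi(x)\wedge y=y$; $\mathfrak{M}_x(B)$ is the set of finitely additive probability measures on $\mathcal{L}_x(B)$. For $\omega\in\mathfrak{M}_{xy}(B)$, $\pi_x(\omega)(\varphi(x))=\omega(\varphi(x)\wedge y=y)$ (similarly $\pi_y$); $\omega|_C$ is restriction. $\operatorname{E}(\lambda,\mu)=\{\omega\in\mathfrak{M}_{xy}(\mathcal{U}):\omega|_A=\lambda,\pi_x(\omega)=\mu\}$. $\lambda$ witnesses $\mu\geq_{\mathbb{E},A}\nu$ means $\pi_x(\lambda)=\mu|_A$ and $\pi_y(\omega)=\nu$ for all $\omega\in\operatorname{E}(\lambda,\mu)$. $\mathbb{B}_{xy}(A)$ is the Boolean subalgebra of $\mathcal{L}_{xy}(\mathcal{U})$ generated by $\{\varphi(x)\wedge y=y:\varphi(x)\in\mathcal{L}_x(\mathcal{U})\}\cup\mathcal{L}_{xy}(A)$. *)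

theory Defs
  imports Complex_Main
begin

datatype ('f, 'u) trm = Var nat | Prm 'u | Fn 'f "('f, 'u) trm list"

datatype ('f, 'r, 'u) fm =
    Eq "('f, 'u) trm" "('f, 'u) trm"
  | Rel 'r "('f, 'u) trm list"
  | Neg "('f, 'r, 'u) fm"
  | Conj "('f, 'r, 'u) fm" "('f, 'r, 'u) fm"
  | Ex nat "('f, 'r, 'u) fm"

fun evalt :: "('f \<Rightarrow> 'u list \<Rightarrow> 'u) \<Rightarrow> (nat \<Rightarrow> 'u) \<Rightarrow> ('f, 'u) trm \<Rightarrow> 'u" where
  "evalt F e (Var i) = e i"
| "evalt F e (Prm a) = a"
| "evalt F e (Fn f ts) = F f (map (evalt F e) ts)"

fun fvt :: "('f, 'u) trm \<Rightarrow> nat set" where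
  "fvt (Var i) = {i}"
| "fvt (Prm a) = {}"
| "fvt (Fn f ts) = (\<Union>t\<in>set ts. fvt t)"

fun prmt :: "('f, 'u) trm \<Rightarrow> 'u set" where
  "prmt (Var i) = {}"
| "prmt (Prm a) = {a}"
| "prmt (Fn f ts) = (\<Union>t\<in>set ts. prmt t)"

fun sat :: "('f \<Rightarrow> 'u list \<Rightarrow> 'u) \<Rightarrow> ('r \<Rightarrow> 'u list \<Rightarrow> bool) \<Rightarrow> (nat \<Rightarrow> 'u)
            \<Rightarrow> ('f, 'r, 'u) fm \<Rightarrow> bool" where
  "sat F R e (Eq s t) = (evalt F e s = evalt F e t)"
| "sat F R e (Rel r ts) = R r (map (evalt F e) ts)"
| "sat F R e (Neg \<phi>) = (\<not> sat F R e \<phi>)"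
| "sat F R e (Conj \<phi> \<psi>) = (sat F R e \<phi> \<and> sat F R e \<psi>)"
| "sat F R e (Ex i \<phi>) = (\<exists>a. sat F R (e(i := a)) \<phi>)"

fun fvf :: "('f, 'r, 'u) fm \<Rightarrow> nat set" where
  "fvf (Eq s t) = fvt s \<union> fvt t"
| "fvf (Rel r ts) = (\<Union>t\<in>set ts. fvt t)"
| "fvf (Neg \<phi>) = fvf \<phi>"
| "fvf (Conj \<phi> \<psi>) = fvf \<phi> \<union> fvf \<psi>"
| "fvf (Ex i \<phi>) = fvf \<phi> - {i}"

fun prmf :: "('f, 'r, 'u) fm \<Rightarrow> 'u set" where
  "prmf (Eq s t) = prmt s \<union> prmt t"
| "prmf (Rel r ts) = (\<Union>t\<in>set ts. prmt t)"
| "prmf (Neg \<phi>) = prmf \<phi>"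
| "prmf (Conj \<phi> \<psi>) = prmf \<phi> \<union> prmf \<psi>"
| "prmf (Ex i \<phi>) = prmf \<phi>"

text \<open>The structure (F,R) on the whole type 'u is the monster model U, and T = Th(U).\<close>

definition kappa_saturated ::
  "('f \<Rightarrow> 'u list \<Rightarrow> 'u) \<Rightarrow> ('r \<Rightarrow> 'u list \<Rightarrow> bool) \<Rightarrow> 'u set \<Rightarrow> bool" where
  "kappa_saturated F R k \<longleftrightarrow>
     (\<forall>B p. (card_of B, card_of k) \<in> ordLess
        \<longrightarrow> (\<forall>\<phi>\<in>p. fvf \<phi> \<subseteq> {0} \<and> prmf \<phi> \<subseteq> B)
        \<longrightarrow> (\<forall>q. finite q \<and> q \<subseteq> p \<longrightarrow> (\<exists>a. \<forall>\<phi>\<in>q. sat F R (\<lambda>_. a) \<phi>))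
        \<longrightarrow> (\<exists>a. \<forall>\<phi>\<in>p. sat F R (\<lambda>_. a) \<phi>))"

definition tuples :: "nat \<Rightarrow> 'u list set" where
  "tuples n = {v. length v = n}"

text \<open>A B-definable subset of U^n, i.e. (the class modulo T of) a formula in
  variables 0..n-1 with parameters from B.\<close>
definition Ldef ::
  "('f \<Rightarrow> 'u list \<Rightarrow> 'u) \<Rightarrow> ('r \<Rightarrow> 'u list \<Rightarrow> bool) \<Rightarrow> nat \<Rightarrow> 'u set \<Rightarrow> 'u list set set" where
  "Ldef F R n B = {X. \<exists>\<phi>::('f,'r,'u) fm. fvf \<phi> \<subseteq> {..<n} \<and> prmf \<phi> \<subseteq> B \<and>
                       X = {v. length v = n \<and> sat F R (\<lambda>i. v ! i) \<phi>}}"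

text \<open>Finitely additive probability measures on L_n(B) (Keisler measures);
  only values on L_n(B) are meaningful.\<close>
definition keisler ::
  "('f \<Rightarrow> 'u list \<Rightarrow> 'u) \<Rightarrow> ('r \<Rightarrow> 'u list \<Rightarrow> bool) \<Rightarrow> nat \<Rightarrow> 'u set \<Rightarrow> ('u list set \<Rightarrow> real) \<Rightarrow> bool" where
  "keisler F R n B m \<longleftrightarrow>
     m (tuples n) = 1 \<and> (\<forall>X\<in>Ldef F R n B. 0 \<le> m X) \<and>
     (\<forall>X\<in>Ldef F R n B. \<forall>Y\<in>Ldef F R n B. X \<inter> Y = {} \<longrightarrow> m (X \<union> Y) = m X + m Y)"

definition xcyl :: "nat \<Rightarrow> nat \<Rightarrow> 'u list set \<Rightarrow> 'u list set" where
  "xcyl n m X = {v. length v = n + m \<and> take n v \<in> X}"   (* phi(x) /\ y = y *)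

definition ycyl :: "nat \<Rightarrow> nat \<Rightarrow> 'u list set \<Rightarrow> 'u list set" where
  "ycyl n m Y = {v. length v = n + m \<and> drop n v \<in> Y}"   (* psi(y) /\ x = x *)

definition Eset ::
  "('f \<Rightarrow> 'u list \<Rightarrow> 'u) \<Rightarrow> ('r \<Rightarrow> 'u list \<Rightarrow> bool) \<Rightarrow> nat \<Rightarrow> nat \<Rightarrow> 'u set
   \<Rightarrow> ('u list set \<Rightarrow> real) \<Rightarrow> ('u list set \<Rightarrow> real) \<Rightarrow> ('u list set \<Rightarrow> real) set" where
  "Eset F R n m A lam mu =
     {om. keisler F R (n + m) UNIV om
        \<and> (\<forall>X\<in>Ldef F R (n + m) A. om X = lam X)
        \<and> (\<forall>X\<in>Ldef F R n UNIV. om (xcyl n m X) = mu X)}"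

definition witnesses_E ::
  "('f \<Rightarrow> 'u list \<Rightarrow> 'u) \<Rightarrow> ('r \<Rightarrow> 'u list \<Rightarrow> bool) \<Rightarrow> nat \<Rightarrow> nat \<Rightarrow> 'u set
   \<Rightarrow> ('u list set \<Rightarrow> real) \<Rightarrow> ('u list set \<Rightarrow> real) \<Rightarrow> ('u list set \<Rightarrow> real) \<Rightarrow> bool" where
  "witnesses_E F R n m A lam mu nu \<longleftrightarrow>
     (\<forall>X\<in>Ldef F R n A. lam (xcyl n m X) = mu X) \<and>
     (\<forall>om\<in>Eset F R n m A lam mu. \<forall>Y\<in>Ldef F R m UNIV. om (ycyl n m Y) = nu Y)"

inductive_set Bxy ::
  "('f \<Rightarrow> 'u list \<Rightarrow> 'u) \<Rightarrow> ('r \<Rightarrow> 'u list \<Rightarrow> bool) \<Rightarrow> nat \<Rightarrow> nat \<Rightarrow> 'u set \<Rightarrow> 'u list set set"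
  for F R n m A where
  gen_x: "X \<in> Ldef F R n UNIV \<Longrightarrow> xcyl n m X \<in> Bxy F R n m A"
| gen_A: "X \<in> Ldef F R (n + m) A \<Longrightarrow> X \<in> Bxy F R n m A"
| top: "tuples (n + m) \<in> Bxy F R n m A"
| compl: "X \<in> Bxy F R n m A \<Longrightarrow> tuples (n + m) - X \<in> Bxy F R n m A"
| inter: "X \<in> Bxy F R n m A \<Longrightarrow> Y \<in> Bxy F R n m A \<Longrightarrow> X \<inter> Y \<in> Bxy F R n m A"

end

theory Submission
  imports Defs "HOL-Analysis.Analysis"
begin


lemma evalt_cong: "(\<forall>i\<in>fvt t. e i = e' i) \<Longrightarrow> evalt F e t = evalt F e' t"
proof (induction t)
  case (Fn f ts)
  have "map (evalt F e) ts = map (evalt F e') ts"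
  proof (rule map_cong[OF refl])
    fix x assume "x \<in> set ts"
    then show "evalt F e x = evalt F e' x" using Fn by simp
  qed
  then show ?case by (simp only: evalt.simps)
qed simp_all

lemma sat_cong: "(\<forall>i\<in>fvf \<phi>. e i = e' i) \<Longrightarrow> sat F R e \<phi> = sat F R e' \<phi>"
proof (induction \<phi> arbitrary: e e')
  case (Eq s t) then show ?case using evalt_cong[of s e e' F] evalt_cong[of t e e' F] by simp
next
  case (Rel r ts)
  have "map (evalt F e) ts = map (evalt F e') ts"
  proof (rule map_cong[OF refl])
    fix x assume "x \<in> set ts"
    then show "evalt F e x = evalt F e' x" using Rel by (intro evalt_cong) auto
  qed
  then show ?case by (simp only: sat.simps)
next
  case (Neg \<phi>) then show ?case by simp
next
  case (Conj \<phi> \<psi>)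
  have "sat F R e \<phi> = sat F R e' \<phi>" using Conj.prems by (intro Conj.IH(1)) auto
  moreover have "sat F R e \<psi> = sat F R e' \<psi>" using Conj.prems by (intro Conj.IH(2)) auto
  ultimately show ?case by simp
next
  case (Ex i \<phi>)
  have "\<And>a. sat F R (e(i := a)) \<phi> = sat F R (e'(i := a)) \<phi>"
    using Ex by (intro Ex.IH) auto
  then show ?case by simp
qed

lemma Ldef_sub: "X \<in> Ldef F R N B \<Longrightarrow> X \<subseteq> tuples N"
  unfolding Ldef_def tuples_def by auto

lemma Ldef_mono: "X \<in> Ldef F R N A \<Longrightarrow> X \<in> Ldef F R N UNIV"
  unfolding Ldef_def by blast

lemma Ldef_inter: "X \<in> Ldef F R N B \<Longrightarrow> Y \<in> Ldef F R N B \<Longrightarrow> X \<inter> Y \<in> Ldef F R N B"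
proof -
  assume "X \<in> Ldef F R N B" "Y \<in> Ldef F R N B"
  then obtain \<phi> \<psi> where "fvf \<phi> \<subseteq> {..<N}" "prmf \<phi> \<subseteq> B" "X = {v. length v = N \<and> sat F R (\<lambda>i. v ! i) \<phi>}"
    "fvf \<psi> \<subseteq> {..<N}" "prmf \<psi> \<subseteq> B" "Y = {v. length v = N \<and> sat F R (\<lambda>i. v ! i) \<psi>}"
    unfolding Ldef_def by blast
  then show ?thesis unfolding Ldef_def
    by (intro CollectI exI[of _ "Conj \<phi> \<psi>"]) auto
qed

lemma Ldef_compl: "X \<in> Ldef F R N B \<Longrightarrow> tuples N - X \<in> Ldef F R N B"
proof -
  assume "X \<in> Ldef F R N B"
  then obtain \<phi> where "fvf \<phi> \<subseteq> {..<N}" "prmf \<phi> \<subseteq> B" "X = {v. length v = N \<and> sat F R (\<lambda>i. v ! i) \<phi>}"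
    unfolding Ldef_def by blast
  then show ?thesis unfolding Ldef_def tuples_def
    by (intro CollectI exI[of _ "Neg \<phi>"]) auto
qed

lemma Ldef_top: "tuples N \<in> Ldef F R N B"
  unfolding Ldef_def tuples_def
  by (intro CollectI exI[of _ "Ex 0 (Eq (Var 0) (Var 0))"]) auto

lemma Ldef_empty: "{} \<in> Ldef F R N B"
  using Ldef_compl[OF Ldef_top, of N F R B] by simp

lemma Ldef_union: "X \<in> Ldef F R N B \<Longrightarrow> Y \<in> Ldef F R N B \<Longrightarrow> X \<union> Y \<in> Ldef F R N B"
proof -
  assume a: "X \<in> Ldef F R N B" "Y \<in> Ldef F R N B"
  have "X \<union> Y = tuples N - ((tuples N - X) \<inter> (tuples N - Y))"
    using Ldef_sub[OF a(1)] Ldef_sub[OF a(2)] by blast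
  then show ?thesis using a by (simp add: Ldef_compl Ldef_inter)
qed

lemma Ldef_Union: "finite I \<Longrightarrow> (\<forall>i\<in>I. D i \<in> Ldef F R N B) \<Longrightarrow> (\<Union>i\<in>I. D i) \<in> Ldef F R N B"
  by (induction I rule: finite_induct) (auto simp: Ldef_empty Ldef_union)

lemma Ldef_xcyl: "X \<in> Ldef F R n B \<Longrightarrow> xcyl n m X \<in> Ldef F R (n + m) B"
proof -
  assume "X \<in> Ldef F R n B"
  then obtain \<phi> where p: "fvf \<phi> \<subseteq> {..<n}" "prmf \<phi> \<subseteq> B" "X = {v. length v = n \<and> sat F R (\<lambda>i. v ! i) \<phi>}"
    unfolding Ldef_def by blast
  have "xcyl n m X = {v. length v = n + m \<and> sat F R (\<lambda>i. v ! i) \<phi>}"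
  proof -
    have "\<And>v. length v = n + m \<Longrightarrow> sat F R (\<lambda>i. take n v ! i) \<phi> = sat F R (\<lambda>i. v ! i) \<phi>"
      using p(1) by (intro sat_cong) auto
    then show ?thesis unfolding xcyl_def p(3) by auto
  qed
  moreover have "fvf \<phi> \<subseteq> {..<n+m}" using p(1) by auto
  ultimately show ?thesis using p(2) unfolding Ldef_def by blast
qed

lemma Bxy_Ldef: "X \<in> Bxy F R n m A \<Longrightarrow> X \<in> Ldef F R (n + m) UNIV"
proof (induction rule: Bxy.induct)
  case (gen_x X) then show ?case by (rule Ldef_xcyl)
next
  case (gen_A X) then show ?case by (rule Ldef_mono)
next
  case top then show ?case by (rule Ldef_top)
next
  case (compl X) then show ?case by (intro Ldef_compl compl.IH)
next
  case (inter X Y) then show ?case by (intro Ldef_inter inter.IH)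
qed

lemma Bxy_sub: "X \<in> Bxy F R n m A \<Longrightarrow> X \<subseteq> tuples (n + m)"
  using Bxy_Ldef Ldef_sub by blast

lemma Bxy_empty: "{} \<in> Bxy F R n m A"
  using Bxy.compl[OF Bxy.top] by simp

lemma Bxy_union: "X \<in> Bxy F R n m A \<Longrightarrow> Y \<in> Bxy F R n m A \<Longrightarrow> X \<union> Y \<in> Bxy F R n m A"
proof -
  assume a: "X \<in> Bxy F R n m A" "Y \<in> Bxy F R n m A"
  have "X \<union> Y = tuples (n+m) - ((tuples (n+m) - X) \<inter> (tuples (n+m) - Y))"
    using Bxy_sub[OF a(1)] Bxy_sub[OF a(2)] by blast
  then show ?thesis using a by (simp add: Bxy.compl Bxy.inter)
qed

lemma Bxy_Union: "finite I \<Longrightarrow> (\<forall>i\<in>I. D i \<in> Bxy F R n m A) \<Longrightarrow> (\<Union>i\<in>I. D i) \<in> Bxy F R n m A"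
  by (induction I rule: finite_induct) (auto simp: Bxy_empty Bxy_union)

lemma Bxy_Inter: "finite G \<Longrightarrow> (\<forall>g\<in>G. h g \<in> Bxy F R n m A) \<Longrightarrow> tuples (n+m) \<inter> (\<Inter>g\<in>G. h g) \<in> Bxy F R n m A"
proof (induction G rule: finite_induct)
  case empty then show ?case by (simp add: Bxy.top)
next
  case (insert x F)
  have "tuples (n+m) \<inter> (\<Inter>g\<in>insert x F. h g) = h x \<inter> (tuples (n+m) \<inter> (\<Inter>g\<in>F. h g))" by auto
  then show ?case using insert by (simp add: Bxy.inter)
qed

lemma k_empty: "keisler F R N B w \<Longrightarrow> w {} = 0"
  unfolding keisler_def using Ldef_empty[of F R N B] by force

lemma k_nonneg: "keisler F R N B w \<Longrightarrow> X \<in> Ldef F R N B \<Longrightarrow> 0 \<le> w X"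
  unfolding keisler_def by blast

lemma k_add: "keisler F R N B w \<Longrightarrow> X \<in> Ldef F R N B \<Longrightarrow> Y \<in> Ldef F R N B \<Longrightarrow> X \<inter> Y = {} \<Longrightarrow> w (X \<union> Y) = w X + w Y"
  unfolding keisler_def by blast

lemma k_compl: "keisler F R N B w \<Longrightarrow> X \<in> Ldef F R N B \<Longrightarrow> w (tuples N - X) = 1 - w X"
proof -
  assume k: "keisler F R N B w" and X: "X \<in> Ldef F R N B"
  have "w (X \<union> (tuples N - X)) = w X + w (tuples N - X)"
    using k X by (intro k_add) (auto intro: Ldef_compl)
  moreover have "X \<union> (tuples N - X) = tuples N" using Ldef_sub[OF X] by blast
  ultimately show ?thesis using k unfolding keisler_def by simp
qed

lemma k_mono: "keisler F R N B w \<Longrightarrow> X \<in> Ldef F R N B \<Longrightarrow> Y \<in> Ldef F R N B \<Longrightarrow> X \<subseteq> Y \<Longrightarrow> w X \<le> w Y"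
proof -
  assume k: "keisler F R N B w" and X: "X \<in> Ldef F R N B" and Y: "Y \<in> Ldef F R N B" and s: "X \<subseteq> Y"
  have d: "Y \<inter> (tuples N - X) \<in> Ldef F R N B" using X Y by (intro Ldef_inter Ldef_compl)
  have "w (X \<union> (Y \<inter> (tuples N - X))) = w X + w (Y \<inter> (tuples N - X))"
    using k X d by (intro k_add) auto
  moreover have "X \<union> (Y \<inter> (tuples N - X)) = Y" using s Ldef_sub[OF Y] by blast
  ultimately show ?thesis using k_nonneg[OF k d] by simp
qed

lemma k_fin: assumes k: "keisler F R N B w" shows "finite I \<Longrightarrow> (\<forall>i\<in>I. D i \<in> Ldef F R N B) \<Longrightarrow>
  (\<forall>i\<in>I. \<forall>j\<in>I. i \<noteq> j \<longrightarrow> D i \<inter> D j = {}) \<Longrightarrow> w (\<Union>i\<in>I. D i) = (\<Sum>i\<in>I. w (D i))"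
proof (induction I rule: finite_induct)
  case empty then show ?case by (simp add: k_empty[OF k])
next
  case (insert x F)
  have "w (D x \<union> (\<Union>i\<in>F. D i)) = w (D x) + w (\<Union>i\<in>F. D i)"
    using insert by (intro k_add[OF k]) (auto intro!: Ldef_Union)
  then show ?case using insert by simp
qed



definition atm :: "'u list set \<Rightarrow> 'u list set set \<Rightarrow> 'u list set set \<Rightarrow> 'u list set" where
  "atm t G S = {v \<in> t. \<forall>g\<in>G. v \<in> g \<longleftrightarrow> g \<in> S}"

lemma atm_disj: "S \<subseteq> G \<Longrightarrow> S' \<subseteq> G \<Longrightarrow> S \<noteq> S' \<Longrightarrow> atm t G S \<inter> atm t G S' = {}"
proof (rule ccontr)
  assume a: "S \<subseteq> G" "S' \<subseteq> G" "S \<noteq> S'" "atm t G S \<inter> atm t G S' \<noteq> {}"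
  then obtain v where "v \<in> atm t G S" "v \<in> atm t G S'" by blast
  then have "\<forall>g\<in>G. g \<in> S \<longleftrightarrow> g \<in> S'" unfolding atm_def by simp
  with a(1,2) have "S = S'" by blast
  with a(3) show False by simp
qed

lemma atm_g:
  assumes gG: "g \<in> G" and gt: "g \<subseteq> t"
  shows "(\<Union>S\<in>{S\<in>Pow G. g \<in> S}. atm t G S) = g"
proof (rule equalityI)
  show "(\<Union>S\<in>{S\<in>Pow G. g \<in> S}. atm t G S) \<subseteq> g"
  proof (rule subsetI)
    fix v assume "v \<in> (\<Union>S\<in>{S\<in>Pow G. g \<in> S}. atm t G S)"
    then obtain S where "g \<in> S" "v \<in> atm t G S" by blast
    then show "v \<in> g" using gG unfolding atm_def by blast
  qed
  show "g \<subseteq> (\<Union>S\<in>{S\<in>Pow G. g \<in> S}. atm t G S)"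
  proof (rule subsetI)
    fix v assume v: "v \<in> g"
    have 1: "v \<in> atm t G {h\<in>G. v \<in> h}" using v gt unfolding atm_def by blast
    have 2: "{h\<in>G. v \<in> h} \<in> {S\<in>Pow G. g \<in> S}" using v gG by blast
    show "v \<in> (\<Union>S\<in>{S\<in>Pow G. g \<in> S}. atm t G S)" using 1 2 by blast
  qed
qed

lemma atm_cover: "(\<Union>S\<in>Pow G. atm t G S) = t"
proof (rule equalityI)
  show "(\<Union>S\<in>Pow G. atm t G S) \<subseteq> t" unfolding atm_def by blast
  show "t \<subseteq> (\<Union>S\<in>Pow G. atm t G S)"
  proof (rule subsetI)
    fix v assume "v \<in> t"
    then have "v \<in> atm t G {h\<in>G. v \<in> h}" unfolding atm_def by blast
    moreover have "{h\<in>G. v \<in> h} \<in> Pow G" by blast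
    ultimately show "v \<in> (\<Union>S\<in>Pow G. atm t G S)" by blast
  qed
qed

lemma atm_Bxy: "finite G \<Longrightarrow> G \<subseteq> Bxy F R n m A \<Longrightarrow> atm (tuples (n+m)) G S \<in> Bxy F R n m A"
proof -
  assume G: "finite G" "G \<subseteq> Bxy F R n m A"
  have "atm (tuples (n+m)) G S = tuples (n+m) \<inter> (\<Inter>g\<in>G. if g \<in> S then g else tuples (n+m) - g)"
    unfolding atm_def by (auto split: if_splits)
  moreover have "tuples (n+m) \<inter> (\<Inter>g\<in>G. if g \<in> S then g else tuples (n+m) - g) \<in> Bxy F R n m A"
    using G by (intro Bxy_Inter) (auto intro: Bxy.compl)
  ultimately show ?thesis by simp
qed

lemma fin:
  assumes G: "finite G" "G \<subseteq> Bxy F R n m A"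
    and hyp: "\<forall>ch\<in>Bxy F R n m A. ch \<subseteq> P \<longrightarrow> (\<exists>\<omega>\<in>Eset F R n m A lam mu. \<omega> ch \<le> r)"
  shows "\<exists>f. (\<forall>X. 0 \<le> f X \<and> f X \<le> 1) \<and> (\<forall>X Y. X \<inter> Y = {} \<longrightarrow> f (X \<union> Y) = f X + f Y)
     \<and> f (tuples (n+m)) = 1 \<and> f P \<le> r \<and> (\<exists>\<omega>\<in>Eset F R n m A lam mu. \<forall>g\<in>G. f g = \<omega> g)"
proof -
  let ?t = "tuples (n+m) :: 'a list set"
  define atS where "atS S = atm ?t G S" for S
  define ch where "ch = (\<Union>S\<in>{S\<in>Pow G. atS S \<subseteq> P}. atS S)"
  have finP: "finite (Pow G)" using G by simp
  have atB: "\<And>S. atS S \<in> Bxy F R n m A" unfolding atS_def using G by (rule atm_Bxy)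
  have "ch \<in> Bxy F R n m A" unfolding ch_def using finP atB by (intro Bxy_Union) auto
  moreover have "ch \<subseteq> P" unfolding ch_def by blast
  ultimately obtain \<omega> where om: "\<omega> \<in> Eset F R n m A lam mu" "\<omega> ch \<le> r" using hyp by blast
  have k: "keisler F R (n+m) UNIV \<omega>" using om(1) unfolding Eset_def by blast
  have atL: "\<And>S. atS S \<in> Ldef F R (n+m) UNIV" using atB Bxy_Ldef by blast
  have sumsub: "\<And>Q. Q \<subseteq> Pow G \<Longrightarrow> \<omega> (\<Union>S\<in>Q. atS S) = (\<Sum>S\<in>Q. \<omega> (atS S))"
  proof -
    fix Q assume Q: "Q \<subseteq> Pow G"
    show "\<omega> (\<Union>S\<in>Q. atS S) = (\<Sum>S\<in>Q. \<omega> (atS S))"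
    proof (rule k_fin[OF k])
      show "finite Q" using Q finP finite_subset by blast
      show "\<forall>S\<in>Q. atS S \<in> Ldef F R (n+m) UNIV" using atL by blast
      show "\<forall>S\<in>Q. \<forall>S'\<in>Q. S \<noteq> S' \<longrightarrow> atS S \<inter> atS S' = {}"
        using Q unfolding atS_def by (meson PowD atm_disj subsetD)
    qed
  qed
  define p where "p S = (if atS S - P \<noteq> {} then (SOME v. v \<in> atS S - P) else (SOME v. v \<in> atS S))" for S
  have p0: "p S \<in> atS S - P" if T: "atS S - P \<noteq> {}" for S
  proof -
    have "\<exists>v. v \<in> atS S - P" using T by blast
    then have "(SOME v. v \<in> atS S - P) \<in> atS S - P" by (rule someI_ex)
    then show ?thesis using T unfolding p_def by simp
  qed
  have p1: "p S \<in> atS S" if ne: "atS S \<noteq> {}" for S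
  proof (cases "atS S - P \<noteq> {}")
    case True then show ?thesis using p0 by blast
  next
    case False
    have "\<exists>v. v \<in> atS S" using ne by blast
    then have "(SOME v. v \<in> atS S) \<in> atS S" by (rule someI_ex)
    then show ?thesis using False unfolding p_def by simp
  qed
  have p2: "\<And>S. atS S \<noteq> {} \<Longrightarrow> (p S \<in> P \<longleftrightarrow> atS S \<subseteq> P)"
  proof -
    fix S assume ne: "atS S \<noteq> {}"
    show "p S \<in> P \<longleftrightarrow> atS S \<subseteq> P"
    proof (cases "atS S - P \<noteq> {}")
      case True
      then have "p S \<in> atS S - P" by (rule p0)
      then show ?thesis using True by blast
    next
      case False
      then show ?thesis using p1[OF ne] by blast
    qed
  qed
  have e0: "\<omega> {} = 0" using k_empty[OF k] .
  have nn: "\<And>S. 0 \<le> \<omega> (atS S)" using k_nonneg[OF k atL] .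
  define f where "f X = (\<Sum>S\<in>Pow G. \<omega> (atS S) * of_bool (p S \<in> X))" for X
  have fcond: "f X = \<omega> (\<Union>S\<in>{S\<in>Pow G. Q S}. atS S)"
    if h: "\<And>S. S \<in> Pow G \<Longrightarrow> atS S \<noteq> {} \<Longrightarrow> (p S \<in> X \<longleftrightarrow> Q S)" for X Q
  proof -
    have "f X = (\<Sum>S\<in>Pow G. if Q S then \<omega> (atS S) else 0)"
      unfolding f_def
    proof (rule sum.cong[OF refl])
      fix S assume S: "S \<in> Pow G"
      show "\<omega> (atS S) * of_bool (p S \<in> X) = (if Q S then \<omega> (atS S) else 0)"
        using h[OF S] e0 by (cases "atS S = {}") auto
    qed
    also have "\<dots> = (\<Sum>S\<in>{S\<in>Pow G. Q S}. \<omega> (atS S))"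
      using sum.inter_filter[OF finP, of "\<lambda>S. \<omega> (atS S)" Q] by simp
    also have "\<dots> = \<omega> (\<Union>S\<in>{S\<in>Pow G. Q S}. atS S)"
      by (rule sumsub[symmetric]) auto
    finally show ?thesis .
  qed
  have atsub: "\<And>S. atS S \<subseteq> ?t" unfolding atS_def atm_def by auto
  have ft: "f ?t = 1"
  proof -
    have "f ?t = \<omega> (\<Union>S\<in>{S\<in>Pow G. True}. atS S)"
      by (rule fcond) (use p1 atsub in blast)
    also have "(\<Union>S\<in>{S\<in>Pow G. True}. atS S) = ?t"
    proof -
      have "{S\<in>Pow G. True} = Pow G" by blast
      then show ?thesis unfolding atS_def by (simp only: atm_cover)
    qed
    finally show ?thesis using k unfolding keisler_def by simp
  qed
  have fg: "f g = \<omega> g" if g: "g \<in> G" for g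
  proof -
    have gt: "g \<subseteq> ?t" using g G(2) Bxy_sub by blast
    have "f g = \<omega> (\<Union>S\<in>{S\<in>Pow G. g \<in> S}. atS S)"
    proof (rule fcond)
      fix S assume "S \<in> Pow G" "atS S \<noteq> {}"
      then show "p S \<in> g \<longleftrightarrow> g \<in> S" using p1[of S] g unfolding atS_def atm_def by blast
    qed
    then show ?thesis unfolding atS_def using atm_g[OF g gt] by simp
  qed
  have fP: "f P \<le> r"
  proof -
    have "f P = \<omega> (\<Union>S\<in>{S\<in>Pow G. atS S \<subseteq> P}. atS S)"
      by (rule fcond) (use p2 in blast)
    then show ?thesis using om(2) unfolding ch_def by simp
  qed
  have fnn: "\<And>X. 0 \<le> f X" unfolding f_def using nn by (auto intro: sum_nonneg)
  have fle: "\<And>X. f X \<le> 1"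
  proof -
    fix X
    have "f X \<le> f ?t" unfolding f_def
    proof (rule sum_mono)
      fix S assume "S \<in> Pow G"
      show "\<omega> (atS S) * of_bool (p S \<in> X) \<le> \<omega> (atS S) * of_bool (p S \<in> ?t)"
        using p1[of S] atsub[of S] nn[of S] e0 by (cases "atS S = {}") auto
    qed
    then show "f X \<le> 1" using ft by simp
  qed
  have fadd: "\<And>X Y. X \<inter> Y = {} \<Longrightarrow> f (X \<union> Y) = f X + f Y"
  proof -
    fix X Y :: "'a list set" assume d: "X \<inter> Y = {}"
    have "f (X \<union> Y) = (\<Sum>S\<in>Pow G. \<omega> (atS S) * of_bool (p S \<in> X) + \<omega> (atS S) * of_bool (p S \<in> Y))"
      unfolding f_def by (rule sum.cong[OF refl]) (use d in auto)
    then show "f (X \<union> Y) = f X + f Y" unfolding f_def by (simp add: sum.distrib)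
  qed
  show ?thesis using fnn fle fadd ft fP fg om(1) by blast
qed



datatype 'u cn = CAdd "'u list set" "'u list set" | CLam "'u list set" | CMu "'u list set" | CTop | CBnd

lemma core:
  fixes F :: "'f \<Rightarrow> 'u list \<Rightarrow> 'u" and R :: "'r \<Rightarrow> 'u list \<Rightarrow> bool"
  assumes hyp: "\<forall>ch\<in>Bxy F R n m A. ch \<subseteq> P \<longrightarrow> (\<exists>\<omega>\<in>Eset F R n m A lam mu. \<omega> ch \<le> r)"
  shows "\<exists>f\<in>Eset F R n m A lam mu. f P \<le> r \<and> (\<forall>X Y. X \<inter> Y = {} \<longrightarrow> f (X \<union> Y) = f X + f Y)"
proof -
  let ?t = "tuples (n+m) :: 'u list set"
  define K where "K = (Pi UNIV (\<lambda>_. {0..1::real}) :: ('u list set \<Rightarrow> real) set)"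
  have cK: "compact K"
  proof -
    have "compactin (product_topology (\<lambda>_. euclidean) UNIV) (PiE UNIV (\<lambda>_::'u list set. {0..1::real}))"
      by (simp add: compactin_PiE)
    then show ?thesis unfolding K_def by (simp add: euclidean_product_topology PiE_UNIV_domain)
  qed
  define cs :: "'u cn \<Rightarrow> ('u list set \<Rightarrow> real) set" where
    "cs c = (case c of CAdd X Y \<Rightarrow> (if X \<inter> Y = {} then {f. f (X \<union> Y) = f X + f Y} else UNIV)
      | CLam X \<Rightarrow> (if X \<in> Ldef F R (n+m) A then {f. f X = lam X} else UNIV)
      | CMu X \<Rightarrow> (if X \<in> Ldef F R n UNIV then {f. f (xcyl n m X) = mu X} else UNIV)
      | CTop \<Rightarrow> {f. f ?t = 1}
      | CBnd \<Rightarrow> {f. f P \<le> r})" for c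
  have coord: "\<And>X. continuous_on UNIV (\<lambda>f::'u list set \<Rightarrow> real. f X)" by simp
  have cl: "closed (cs c)" for c
  proof (cases c)
    case (CAdd X Y)
    have "closed {f::'u list set \<Rightarrow> real. f (X \<union> Y) = f X + f Y}"
      by (intro closed_Collect_eq coord continuous_on_add)
    then show ?thesis using CAdd by (simp add: cs_def)
  next
    case (CLam X)
    have "closed {f::'u list set \<Rightarrow> real. f X = lam X}"
      by (intro closed_Collect_eq coord continuous_on_const)
    then show ?thesis using CLam by (simp add: cs_def)
  next
    case (CMu X)
    have "closed {f::'u list set \<Rightarrow> real. f (xcyl n m X) = mu X}"
      by (intro closed_Collect_eq coord continuous_on_const)
    then show ?thesis using CMu by (simp add: cs_def)
  next
    case CTop
    have "closed {f::'u list set \<Rightarrow> real. f ?t = 1}"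
      by (intro closed_Collect_eq coord continuous_on_const)
    then show ?thesis using CTop by (simp add: cs_def)
  next
    case CBnd
    have "closed {f::'u list set \<Rightarrow> real. f P \<le> r}"
      by (intro closed_Collect_le coord continuous_on_const)
    then show ?thesis using CBnd by (simp add: cs_def)
  qed
  have "K \<inter> (\<Inter>c\<in>UNIV. cs c) \<noteq> {}"
  proof (rule compact_imp_fip_image[OF cK])
    show "\<And>c. c \<in> UNIV \<Longrightarrow> closed (cs c)" using cl by blast
    fix I' :: "'u cn set" assume I': "finite I'" "I' \<subseteq> UNIV"
    define gsel where "gsel c = (case c of CLam X \<Rightarrow> if X \<in> Ldef F R (n+m) A then X else ?t
        | CMu X \<Rightarrow> if X \<in> Ldef F R n UNIV then xcyl n m X else ?t | _ \<Rightarrow> ?t)" for c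
    have G1: "finite (gsel ` I')" using I' by simp
    have G2: "gsel ` I' \<subseteq> Bxy F R n m A"
    proof
      fix g assume "g \<in> gsel ` I'"
      then obtain c where g: "g = gsel c" by blast
      show "g \<in> Bxy F R n m A"
        unfolding g gsel_def by (cases c) (simp_all add: Bxy.gen_A Bxy.gen_x Bxy.top)
    qed
    obtain f \<omega> where f: "\<forall>X. 0 \<le> f X \<and> f X \<le> 1" "\<forall>X Y. X \<inter> Y = {} \<longrightarrow> f (X \<union> Y) = f X + f Y"
      "f ?t = 1" "f P \<le> r" "\<omega> \<in> Eset F R n m A lam mu" "\<forall>g\<in>gsel ` I'. f g = \<omega> g"
      using fin[OF G1 G2 hyp] by blast
    have "f \<in> K" unfolding K_def using f(1) by auto
    moreover have "f \<in> cs c" if c: "c \<in> I'" for c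
    proof (cases c)
      case (CAdd X Y) then show ?thesis using f(2) by (simp add: cs_def)
    next
      case (CLam X)
      show ?thesis
      proof (cases "X \<in> Ldef F R (n+m) A")
        case True
        have gX: "gsel c = X" using CLam True by (simp add: gsel_def)
        have "f X = \<omega> X" using f(6) c gX by (metis imageI)
        also have "\<dots> = lam X" using f(5) True unfolding Eset_def by blast
        finally show ?thesis using CLam True by (simp add: cs_def)
      qed (simp add: cs_def CLam)
    next
      case (CMu X)
      show ?thesis
      proof (cases "X \<in> Ldef F R n UNIV")
        case True
        have gX: "gsel c = xcyl n m X" using CMu True by (simp add: gsel_def)
        have "f (xcyl n m X) = \<omega> (xcyl n m X)" using f(6) c gX by (metis imageI)
        also have "\<dots> = mu X" using f(5) True unfolding Eset_def by blast
        finally show ?thesis using CMu True by (simp add: cs_def)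
      qed (simp add: cs_def CMu)
    next
      case CTop then show ?thesis using f(3) by (simp add: cs_def)
    next
      case CBnd then show ?thesis using f(4) by (simp add: cs_def)
    qed
    ultimately show "K \<inter> (\<Inter>c\<in>I'. cs c) \<noteq> {}" by blast
  qed
  then obtain f where fK: "f \<in> K" and fc: "\<And>c. f \<in> cs c" by blast
  have fadd: "\<forall>X Y. X \<inter> Y = {} \<longrightarrow> f (X \<union> Y) = f X + f Y"
  proof (intro allI impI)
    fix X Y :: "'u list set" assume "X \<inter> Y = {}"
    then show "f (X \<union> Y) = f X + f Y" using fc[of "CAdd X Y"] by (simp add: cs_def)
  qed
  have ft: "f ?t = 1" using fc[of CTop] by (simp add: cs_def)
  have fP: "f P \<le> r" using fc[of CBnd] by (simp add: cs_def)
  have fnn: "\<And>X. 0 \<le> f X" using fK unfolding K_def by auto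
  have flam: "\<And>X. X \<in> Ldef F R (n+m) A \<Longrightarrow> f X = lam X"
  proof -
    fix X assume "X \<in> Ldef F R (n+m) A"
    then show "f X = lam X" using fc[of "CLam X"] by (simp add: cs_def)
  qed
  have fmu: "\<And>X. X \<in> Ldef F R n UNIV \<Longrightarrow> f (xcyl n m X) = mu X"
  proof -
    fix X assume "X \<in> Ldef F R n UNIV"
    then show "f (xcyl n m X) = mu X" using fc[of "CMu X"] by (simp add: cs_def)
  qed
  have "f \<in> Eset F R n m A lam mu"
    unfolding Eset_def keisler_def using ft fnn fadd flam fmu by blast
  then show ?thesis using fP fadd by blast
qed



theorem theorem3p18:
  fixes F :: "'f \<Rightarrow> 'u list \<Rightarrow> 'u" and R :: "'r \<Rightarrow> 'u list \<Rightarrow> bool"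
    and k A :: "'u set" and n m :: nat
    and mu nu lam :: "'u list set \<Rightarrow> real"
  assumes monster: "kappa_saturated F R k" and kinf: "infinite k"
    and small: "(card_of A, card_of k) \<in> ordLess"
    and mu: "keisler F R n UNIV mu"
    and nu: "keisler F R m UNIV nu"
    and lam: "keisler F R (n + m) A lam"
    and wit: "witnesses_E F R n m A lam mu nu"
  shows "\<forall>\<psi>\<in>Ldef F R m UNIV. \<forall>\<epsilon>>0. \<exists>chim chip.
           chim \<in> Bxy F R n m A \<and> chip \<in> Bxy F R n m A \<and>
           chim \<subseteq> ycyl n m \<psi> \<and> ycyl n m \<psi> \<subseteq> chip \<and>
           (\<forall>om\<in>Eset F R n m A lam mu. om chip - om chim < \<epsilon>) \<and>
           (\<forall>om\<in>Eset F R n m A lam mu.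
              \<bar>om chip - nu \<psi>\<bar> < \<epsilon> \<and> \<bar>om chim - nu \<psi>\<bar> < \<epsilon>)"
proof (intro ballI allI impI)
  fix \<psi> and \<epsilon> :: real
  assume \<psi>: "\<psi> \<in> Ldef F R m UNIV" and e: "\<epsilon> > 0"
  let ?t = "tuples (n+m) :: 'u list set"
  let ?Y = "ycyl n m \<psi>"
  let ?E = "Eset F R n m A lam mu"
  have Yt: "?Y \<subseteq> ?t" unfolding ycyl_def tuples_def by auto
  have witY: "\<And>\<omega>. \<omega> \<in> ?E \<Longrightarrow> \<omega> ?Y = nu \<psi>" using wit \<psi> unfolding witnesses_E_def by blast
  have kE: "\<And>\<omega>. \<omega> \<in> ?E \<Longrightarrow> keisler F R (n+m) UNIV \<omega>" unfolding Eset_def by blast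
  have "\<exists>c\<in>Bxy F R n m A. c \<subseteq> ?Y \<and> (\<forall>\<omega>\<in>?E. nu \<psi> - \<epsilon>/2 < \<omega> c)"
  proof (rule ccontr)
    assume "\<not> ?thesis"
    then have "\<forall>ch\<in>Bxy F R n m A. ch \<subseteq> ?Y \<longrightarrow> (\<exists>\<omega>\<in>?E. \<omega> ch \<le> nu \<psi> - \<epsilon>/2)"
      by (auto simp: not_less)
    from core[OF this] obtain f where "f \<in> ?E" "f ?Y \<le> nu \<psi> - \<epsilon>/2" by blast
    with witY[of f] e show False by simp
  qed
  then obtain chm where chm: "chm \<in> Bxy F R n m A" "chm \<subseteq> ?Y" "\<forall>\<omega>\<in>?E. nu \<psi> - \<epsilon>/2 < \<omega> chm"
    by blast
  have "\<exists>c\<in>Bxy F R n m A. c \<subseteq> ?t - ?Y \<and> (\<forall>\<omega>\<in>?E. 1 - nu \<psi> - \<epsilon>/2 < \<omega> c)"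
  proof (rule ccontr)
    assume "\<not> ?thesis"
    then have "\<forall>ch\<in>Bxy F R n m A. ch \<subseteq> ?t - ?Y \<longrightarrow> (\<exists>\<omega>\<in>?E. \<omega> ch \<le> 1 - nu \<psi> - \<epsilon>/2)"
      by (auto simp: not_less)
    from core[OF this] obtain f where f: "f \<in> ?E" "f (?t - ?Y) \<le> 1 - nu \<psi> - \<epsilon>/2"
      "\<forall>X Y. X \<inter> Y = {} \<longrightarrow> f (X \<union> Y) = f X + f Y" by blast
    have "f (?Y \<union> (?t - ?Y)) = f ?Y + f (?t - ?Y)" using f(3) by blast
    moreover have "?Y \<union> (?t - ?Y) = ?t" using Yt by blast
    moreover have "f ?t = 1" using kE[OF f(1)] unfolding keisler_def by blast
    ultimately show False using witY[OF f(1)] f(2) e by simp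
  qed
  then obtain chu where chu: "chu \<in> Bxy F R n m A" "chu \<subseteq> ?t - ?Y" "\<forall>\<omega>\<in>?E. 1 - nu \<psi> - \<epsilon>/2 < \<omega> chu"
    by blast
  define chp where "chp = ?t - chu"
  have chpB: "chp \<in> Bxy F R n m A" unfolding chp_def using chu(1) by (rule Bxy.compl)
  have Ychp: "?Y \<subseteq> chp" unfolding chp_def using chu(2) Yt by blast
  have bounds: "nu \<psi> - \<epsilon>/2 < \<omega> chm \<and> \<omega> chm \<le> \<omega> chp \<and> \<omega> chp < nu \<psi> + \<epsilon>/2" if om: "\<omega> \<in> ?E" for \<omega>
  proof -
    have k: "keisler F R (n+m) UNIV \<omega>" using kE[OF om] .
    have "\<omega> chp = 1 - \<omega> chu" unfolding chp_def using k_compl[OF k Bxy_Ldef[OF chu(1)]] .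
    then have 1: "\<omega> chp < nu \<psi> + \<epsilon>/2" using chu(3) om by force
    have 2: "\<omega> chm \<le> \<omega> chp"
      using k_mono[OF k Bxy_Ldef[OF chm(1)] Bxy_Ldef[OF chpB]] chm(2) Ychp by blast
    show ?thesis using 1 2 chm(3) om by blast
  qed
  show "\<exists>chim chip.
           chim \<in> Bxy F R n m A \<and> chip \<in> Bxy F R n m A \<and>
           chim \<subseteq> ycyl n m \<psi> \<and> ycyl n m \<psi> \<subseteq> chip \<and>
           (\<forall>om\<in>Eset F R n m A lam mu. om chip - om chim < \<epsilon>) \<and>
           (\<forall>om\<in>Eset F R n m A lam mu.
              \<bar>om chip - nu \<psi>\<bar> < \<epsilon> \<and> \<bar>om chim - nu \<psi>\<bar> < \<epsilon>)"
  proof (intro exI conjI ballI)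
    show "chm \<in> Bxy F R n m A" "chp \<in> Bxy F R n m A" "chm \<subseteq> ?Y" "?Y \<subseteq> chp"
      using chm chpB Ychp by auto
    fix om assume "om \<in> ?E"
    from bounds[OF this] e show "om chp - om chm < \<epsilon>" by linarith
  next
    fix om assume "om \<in> ?E"
    from bounds[OF this] e show "\<bar>om chp - nu \<psi>\<bar> < \<epsilon>" by linarith
  next
    fix om assume "om \<in> ?E"
    from bounds[OF this] e show "\<bar>om chm - nu \<psi>\<bar> < \<epsilon>" by linarith
  qed
qed


end
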